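(* Assume job sizes are exponentially distributed with mean 1. Fix a server $s\in\mathcal{S}$, multipliers $\nu_j\in\mathbb{R}$ ($j\in\mathcal{J}_s$) and $\eta_{j,s}\in\mathbb{R}$. Let $g^*$ be the maximal long-run average reward of the single-server problem (SP$_s$) below. Then there exists a policy $\phi^*$ maximizing (SP$_s$) such that for every $j\in\mathcal{J}_s$ and every $n\in\mathcal{C}_{k(s)}$, $$\alpha^{\phi^*}_{j,s}(n)=\begin{cases}1,&\text{if }\frac{\nu_j}{\lambda_j}<V^{g^*}_s(n+1)-V^{g^*}_s(n),\\ 1\text{ or }0,&\text{if }\frac{\nu_j}{\lambda_j}=V^{g^*}_s(n+1)-V^{g^*}_s(n),\\ 0,&\text{otherwise.}\end{cases}$$
   Context: Setting: job types $j\in\mathcal{J}$ with Poisson arrival rates $\lambda_j>0$; server $s$ belongs to group $k=k(s)$, serves by processor sharing at total rate $\mu_k>0$ when nonempty, holds at most $B_k\ge1$ jobs, and consumes power $\varepsilon_k$ when nonempty and $\varepsilon^0_k$ when empty ($\varepsilon_k>\varepsilon^0_k\ge0$); $\mathcal{J}_s$ is the set of job types server $s$ may serve. $\mathcal{B}_k=\{0,\dots,B_k\}$, $\mathcal{C}_k=\{0,\dots,B_k-1\}$. $e^*\in\mathbb{R}$ is a fixed constant (the optimal energy efficiency of the farm), $f^r_k(n)=f^\mu_k(n)-e^*f^\varepsilon_k(n)$ with $f^\mu_k(0)=0$, $f^\varepsilon_k(0)=\varepsilon^0_k$, $f^\mu_k(n)=\mu_k$, $f^\varepsilon_k(n)=\varepsilon_k$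 for $n>0$. Single-server problem (SP$_s$): a stationary policy chooses $\alpha_{j,s}(n)\in[0,1]$ for $j\in\mathcal{J}_s$, $n\in\mathcal{B}_k$; the server state is then a birth–death chain on $\mathcal{B}_k$ with upward rate $\sum_{j\in\mathcal{J}_s}\lambda_j\alpha_{j,s}(n)$ and downward rate $\mu_k$ in states $n\ge1$. With steady-state distribution $\pi_s$, (SP$_s$) maximizes $\sum_{n\in\mathcal{B}_k}\pi_s(n)\bigl(f^r_k(n)-\sum_{j\in\mathcal{J}_s}\nu_j\alpha_{j,s}(n)-\mathbf{1}\{n=B_k\}\sum_{j\in\mathcal{J}_s}\eta_{j,s}\alpha_{j,s}(B_k)\bigr)$. For $g\in\mathbb{R}$, define the reward rate in state $n$ under actions $\alpha$ as $\tilde f^g(n)=f^r_k(n)-g-\sum_{j\in\mathcal{J}_s}\nu_j\alpha_{j,s}(n)$ for $n\in\mathcal{C}_k$ and $f^r_k(n)-g-\sum_{j\in\mathcal{J}_s}(\nu_j+\eta_{j,s})\alpha_{j,s}(n)$ for $n=B_k$; $V^g_s(n)$ is the maximum, over stationary policies with $\sum_{j\in\mathcal{J}_s}\alpha_{j,s}(0)>0$, of the expected cumulative $\tilde f^g$-reward accumulated starting from state $n$ until the chain first enters state $0$, with $V^g_s(0)=0$. *)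

theory Defs
  imports "HOL-Analysis.Analysis"
begin

text \<open>Single-server problem (SP_s) for a server with admissible job-type set Js,
  arrival rates lam, capacity Bk, service rate mu, power eps (busy) / eps0 (idle),
  and fixed constant estar.  A stationary policy is alpha :: 'j => nat => real,
  alpha j n being the admission probability of a type-j job in state n.\<close>

definition fr :: "real \<Rightarrow> real \<Rightarrow> real \<Rightarrow> real \<Rightarrow> nat \<Rightarrow> real" where
  "fr mu eps eps0 estar n =
     (if n = 0 then 0 else mu) - estar * (if n = 0 then eps0 else eps)"

definition admissible :: "'j set \<Rightarrow> nat \<Rightarrow> ('j \<Rightarrow> nat \<Rightarrow> real) \<Rightarrow> bool" where
  "admissible Js Bk alpha \<longleftrightarrow> (\<forall>j\<in>Js. \<forall>n\<le>Bk. 0 \<le> alpha j n \<and> alpha j n \<le> 1)"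

definition up :: "'j set \<Rightarrow> ('j \<Rightarrow> real) \<Rightarrow> nat \<Rightarrow> ('j \<Rightarrow> nat \<Rightarrow> real) \<Rightarrow> nat \<Rightarrow> real" where
  "up Js lam Bk alpha n = (if n < Bk then (\<Sum>j\<in>Js. lam j * alpha j n) else 0)"

definition gen :: "'j set \<Rightarrow> ('j \<Rightarrow> real) \<Rightarrow> nat \<Rightarrow> real \<Rightarrow> ('j \<Rightarrow> nat \<Rightarrow> real)
                    \<Rightarrow> nat \<Rightarrow> nat \<Rightarrow> real" where
  "gen Js lam Bk mu alpha n m =
     (if m = Suc n then up Js lam Bk alpha n
      else if 0 < n \<and> m = n - 1 then mu
      else if m = n then - (up Js lam Bk alpha n + (if 0 < n then mu else 0))
      else 0)"

definition stationary :: "'j set \<Rightarrow> ('j \<Rightarrow> real) \<Rightarrow> nat \<Rightarrow> real \<Rightarrow> ('j \<Rightarrow> nat \<Rightarrow> real)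
                          \<Rightarrow> (nat \<Rightarrow> real) \<Rightarrow> bool" where
  "stationary Js lam Bk mu alpha p \<longleftrightarrow>
     (\<forall>n. Bk < n \<longrightarrow> p n = 0) \<and> (\<forall>n\<le>Bk. 0 \<le> p n) \<and> (\<Sum>n\<le>Bk. p n) = 1 \<and>
     (\<forall>m\<le>Bk. (\<Sum>n\<le>Bk. p n * gen Js lam Bk mu alpha n m) = 0)"

definition steady :: "'j set \<Rightarrow> ('j \<Rightarrow> real) \<Rightarrow> nat \<Rightarrow> real \<Rightarrow> ('j \<Rightarrow> nat \<Rightarrow> real) \<Rightarrow> nat \<Rightarrow> real" where
  "steady Js lam Bk mu alpha = (THE p. stationary Js lam Bk mu alpha p)"

text \<open>Per-state reward of (SP_s) under actions alpha (Lagrangian terms included).\<close>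
definition sp_reward :: "'j set \<Rightarrow> nat \<Rightarrow> real \<Rightarrow> real \<Rightarrow> real \<Rightarrow> real \<Rightarrow> ('j \<Rightarrow> real)
                         \<Rightarrow> ('j \<Rightarrow> real) \<Rightarrow> ('j \<Rightarrow> nat \<Rightarrow> real) \<Rightarrow> nat \<Rightarrow> real" where
  "sp_reward Js Bk mu eps eps0 estar nu eta alpha n =
     fr mu eps eps0 estar n - (\<Sum>j\<in>Js. nu j * alpha j n)
     - (if n = Bk then (\<Sum>j\<in>Js. eta j * alpha j Bk) else 0)"

definition avg_reward :: "'j set \<Rightarrow> ('j \<Rightarrow> real) \<Rightarrow> nat \<Rightarrow> real \<Rightarrow> real \<Rightarrow> real \<Rightarrow> real
                          \<Rightarrow> ('j \<Rightarrow> real) \<Rightarrow> ('j \<Rightarrow> real) \<Rightarrow> ('j \<Rightarrow> nat \<Rightarrow> real) \<Rightarrow> real" where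
  "avg_reward Js lam Bk mu eps eps0 estar nu eta alpha =
     (\<Sum>n\<le>Bk. steady Js lam Bk mu alpha n * sp_reward Js Bk mu eps eps0 estar nu eta alpha n)"

definition gstar :: "'j set \<Rightarrow> ('j \<Rightarrow> real) \<Rightarrow> nat \<Rightarrow> real \<Rightarrow> real \<Rightarrow> real \<Rightarrow> real
                     \<Rightarrow> ('j \<Rightarrow> real) \<Rightarrow> ('j \<Rightarrow> real) \<Rightarrow> real" where
  "gstar Js lam Bk mu eps eps0 estar nu eta =
     (SUP alpha \<in> {alpha. admissible Js Bk alpha}. avg_reward Js lam Bk mu eps eps0 estar nu eta alpha)"

definition ftil :: "'j set \<Rightarrow> nat \<Rightarrow> real \<Rightarrow> real \<Rightarrow> real \<Rightarrow> real \<Rightarrow> ('j \<Rightarrow> real)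
                    \<Rightarrow> ('j \<Rightarrow> real) \<Rightarrow> real \<Rightarrow> ('j \<Rightarrow> nat \<Rightarrow> real) \<Rightarrow> nat \<Rightarrow> real" where
  "ftil Js Bk mu eps eps0 estar nu eta g alpha n =
     (if n < Bk then fr mu eps eps0 estar n - g - (\<Sum>j\<in>Js. nu j * alpha j n)
      else fr mu eps eps0 estar n - g - (\<Sum>j\<in>Js. (nu j + eta j) * alpha j n))"

definition outrate :: "'j set \<Rightarrow> ('j \<Rightarrow> real) \<Rightarrow> nat \<Rightarrow> real \<Rightarrow> ('j \<Rightarrow> nat \<Rightarrow> real) \<Rightarrow> nat \<Rightarrow> real" where
  "outrate Js lam Bk mu alpha n = up Js lam Bk alpha n + mu"

definition jump :: "'j set \<Rightarrow> ('j \<Rightarrow> real) \<Rightarrow> nat \<Rightarrow> real \<Rightarrow> ('j \<Rightarrow> nat \<Rightarrow> real)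
                    \<Rightarrow> nat \<Rightarrow> nat \<Rightarrow> real" where
  "jump Js lam Bk mu alpha l m =
     (if m = Suc l then up Js lam Bk alpha l / outrate Js lam Bk mu alpha l
      else if Suc m = l then mu / outrate Js lam Bk mu alpha l
      else 0)"

text \<open>taboo t n m: probability that the embedded jump chain started in n is in state m
  after t jumps without having visited state 0 (states m in 1..Bk).\<close>
fun taboo :: "'j set \<Rightarrow> ('j \<Rightarrow> real) \<Rightarrow> nat \<Rightarrow> real \<Rightarrow> ('j \<Rightarrow> nat \<Rightarrow> real)
              \<Rightarrow> nat \<Rightarrow> nat \<Rightarrow> nat \<Rightarrow> real" where
  "taboo Js lam Bk mu alpha 0 n m = (if m = n then 1 else 0)"
| "taboo Js lam Bk mu alpha (Suc t) n m =
     (\<Sum>l\<in>{1..Bk}. taboo Js lam Bk mu alpha t n l * jump Js lam Bk mu alpha l m)"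

text \<open>Expected cumulative tilde f^g reward from state n until first entrance into 0:
  in each visit to state m the chain stays an exponential time of mean 1/outrate m.\<close>
definition cum_reward :: "'j set \<Rightarrow> ('j \<Rightarrow> real) \<Rightarrow> nat \<Rightarrow> real \<Rightarrow> real \<Rightarrow> real \<Rightarrow> real
                          \<Rightarrow> ('j \<Rightarrow> real) \<Rightarrow> ('j \<Rightarrow> real) \<Rightarrow> real \<Rightarrow> ('j \<Rightarrow> nat \<Rightarrow> real) \<Rightarrow> nat \<Rightarrow> real" where
  "cum_reward Js lam Bk mu eps eps0 estar nu eta g alpha n =
     (\<Sum>t. \<Sum>m\<in>{1..Bk}. taboo Js lam Bk mu alpha t n m
            * ftil Js Bk mu eps eps0 estar nu eta g alpha m / outrate Js lam Bk mu alpha m)"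

definition Vfun :: "'j set \<Rightarrow> ('j \<Rightarrow> real) \<Rightarrow> nat \<Rightarrow> real \<Rightarrow> real \<Rightarrow> real \<Rightarrow> real
                    \<Rightarrow> ('j \<Rightarrow> real) \<Rightarrow> ('j \<Rightarrow> real) \<Rightarrow> real \<Rightarrow> nat \<Rightarrow> real" where
  "Vfun Js lam Bk mu eps eps0 estar nu eta g n =
     (if n = 0 then 0
      else (SUP alpha \<in> {alpha. admissible Js Bk alpha \<and> 0 < (\<Sum>j\<in>Js. alpha j 0)}.
              cum_reward Js lam Bk mu eps eps0 estar nu eta g alpha n))"

end

theory Submission
  imports Defs
begin

locale spl =
  fixes Js :: "'j set" and lam :: "'j \<Rightarrow> real" and K :: nat
    and mu eps eps0 estar :: real and nu eta :: "'j \<Rightarrow> real"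
  assumes finJs: "finite Js" and lam_pos: "\<And>j. j \<in> Js \<Longrightarrow> 0 < lam j"
    and mu_pos: "0 < mu" and K_ge: "1 \<le> K"
begin

abbreviation "U a n \<equiv> up Js lam K a n"
abbreviation "Out a n \<equiv> outrate Js lam K mu a n"
abbreviation "Jp a \<equiv> jump Js lam K mu a"
abbreviation "Tb a \<equiv> taboo Js lam K mu a"
abbreviation "F n \<equiv> fr mu eps eps0 estar n"
abbreviation "Ft g a n \<equiv> ftil Js K mu eps eps0 estar nu eta g a n"
abbreviation "Rw a n \<equiv> sp_reward Js K mu eps eps0 estar nu eta a n"
abbreviation "adm a \<equiv> admissible Js K a"
abbreviation "Gn a \<equiv> gen Js lam K mu a"

lemma up_nonneg: "adm a \<Longrightarrow> 0 \<le> U a n"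
  unfolding up_def admissible_def
  by (auto intro!: sum_nonneg simp: less_imp_le lam_pos)

lemma up_K: "K \<le> n \<Longrightarrow> U a n = 0"
  unfolding up_def by auto

lemma up_le: "adm a \<Longrightarrow> U a n \<le> (\<Sum>j\<in>Js. lam j)"
proof -
  assume "adm a"
  then have A: "\<forall>j\<in>Js. \<forall>n\<le>K. 0 \<le> a j n \<and> a j n \<le> 1" unfolding admissible_def .
  have "(\<Sum>j\<in>Js. lam j * a j n) \<le> (\<Sum>j\<in>Js. lam j)" if "n < K"
  proof (rule sum_mono)
    fix j assume "j \<in> Js"
    then show "lam j * a j n \<le> lam j" using A that lam_pos[of j]
      by (simp add: mult_left_le)
  qed
  moreover have "0 \<le> (\<Sum>j\<in>Js. lam j)" by (auto intro!: sum_nonneg simp: less_imp_le lam_pos)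
  ultimately show ?thesis unfolding up_def by auto
qed

lemma out_pos: "adm a \<Longrightarrow> 0 < Out a n"
  unfolding outrate_def using up_nonneg[of a n] mu_pos by simp

lemma jump_alt: "Jp a l m = (if m = Suc l then U a l / Out a l else 0)
   + (if Suc m = l then mu / Out a l else 0)"
  unfolding jump_def by auto

lemma jump_nonneg: "adm a \<Longrightarrow> 0 \<le> Jp a l m"
  unfolding jump_alt using up_nonneg[of a l] out_pos[of a l] mu_pos by auto

lemma taboo_nonneg: "adm a \<Longrightarrow> 0 \<le> Tb a t n m"
  by (induction t arbitrary: m) (auto intro!: sum_nonneg mult_nonneg_nonneg jump_nonneg)

lemma jump_sum:
  assumes "1 \<le> n" "n \<le> K" "X 0 = 0"
  shows "(\<Sum>l\<in>{1..K}. Jp a n l * X l) =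
     (if n < K then U a n / Out a n * X (Suc n) else 0) + mu / Out a n * X (n - 1)"
proof -
  have "(\<Sum>l\<in>{1..K}. Jp a n l * X l) = (\<Sum>l\<in>{1..K}. (if l = Suc n then U a n / Out a n * X l else 0))
     + (\<Sum>l\<in>{1..K}. (if l = n - 1 then mu / Out a n * X l else 0))"
    unfolding jump_alt sum.distrib[symmetric]
    by (rule sum.cong) (use assms in auto)
  also have "\<dots> = (if n < K then U a n / Out a n * X (Suc n) else 0) + mu / Out a n * X (n - 1)"
    using assms by (auto simp: sum.delta)
  finally show ?thesis .
qed

fun Dg :: "(nat \<Rightarrow> real) \<Rightarrow> ('j \<Rightarrow> nat \<Rightarrow> real) \<Rightarrow> nat \<Rightarrow> real" where
  "Dg c a 0 = c K * Out a K / mu"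
| "Dg c a (Suc k) = (c (K - Suc k) * Out a (K - Suc k) + U a (K - Suc k) * Dg c a k) / mu"

definition Xg :: "(nat \<Rightarrow> real) \<Rightarrow> ('j \<Rightarrow> nat \<Rightarrow> real) \<Rightarrow> nat \<Rightarrow> real" where
  "Xg c a n = (\<Sum>i\<in>{1..n}. Dg c a (K - i))"

lemma Xg_0: "Xg c a 0 = 0" unfolding Xg_def by simp

lemma Xg_Suc: "Xg c a (Suc n) = Xg c a n + Dg c a (K - Suc n)"
  unfolding Xg_def by (simp add: sum.cl_ivl_Suc)

lemma Xg_eq:
  assumes adm: "adm a" and n: "1 \<le> n" "n \<le> K"
  shows "Xg c a n = c n + (\<Sum>l\<in>{1..K}. Jp a n l * Xg c a l)"
proof -
  define u where "u = U a n"
  define ov where "ov = Out a n"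
  have o: "ov = u + mu" unfolding ov_def u_def outrate_def by simp
  have opos: "0 < ov" unfolding ov_def using out_pos[OF adm] .
  have u0: "0 \<le> u" unfolding u_def using up_nonneg[OF adm] .
  obtain n' where n': "n = Suc n'" using n by (cases n) auto
  have Xm: "Xg c a (n - 1) = Xg c a n - Dg c a (K - n)" using n' Xg_Suc[of c a n'] by simp
  have js: "(\<Sum>l\<in>{1..K}. Jp a n l * Xg c a l) =
     (if n < K then u / ov * Xg c a (Suc n) else 0) + mu / ov * Xg c a (n - 1)"
    unfolding u_def ov_def by (rule jump_sum) (use n Xg_0 in auto)
  show ?thesis
  proof (cases "n < K")
    case True
    have KK: "K - n = Suc (K - Suc n)" using True by simp
    have D: "mu * Dg c a (K - n) = c n * ov + u * Dg c a (K - Suc n)"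
      unfolding KK using mu_pos True by (simp add: u_def ov_def)
    have "u / ov * (Xg c a n + Dg c a (K - Suc n)) + mu / ov * (Xg c a n - Dg c a (K - n))
       = (u * (Xg c a n + Dg c a (K - Suc n)) + mu * (Xg c a n - Dg c a (K - n))) / ov"
      by (simp add: add_divide_distrib)
    also have "u * (Xg c a n + Dg c a (K - Suc n)) + mu * (Xg c a n - Dg c a (K - n))
       = ov * Xg c a n - c n * ov"
      using D o by (simp add: algebra_simps)
    also have "(ov * Xg c a n - c n * ov) / ov = Xg c a n - c n" using opos
      by (simp add: field_simps)
    finally show ?thesis unfolding js Xm Xg_Suc using True by simp
  next
    case False
    then have nK: "n = K" using n by simp
    have uK: "u = 0" unfolding u_def using nK up_K by simp
    have D: "Dg c a (K - n) = c n" using nK uK o mu_pos by (simp add: ov_def)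
    show ?thesis unfolding js Xm using False uK o mu_pos D by simp
  qed
qed

lemma telescope:
  assumes adm: "adm a" and n: "n \<in> {1..K}"
    and X: "\<And>m. m \<in> {1..K} \<Longrightarrow> X m = c m + (\<Sum>l\<in>{1..K}. Jp a m l * X l)"
  shows "(\<Sum>t<T. \<Sum>m\<in>{1..K}. Tb a t n m * c m) = X n - (\<Sum>m\<in>{1..K}. Tb a T n m * X m)"
proof (induction T)
  case 0
  have "(\<Sum>m\<in>{1..K}. Tb a 0 n m * X m) = (\<Sum>m\<in>{1..K}. if m = n then X m else 0)"
    by (rule sum.cong) auto
  then show ?case using n by simp
next
  case (Suc T)
  have "(\<Sum>m\<in>{1..K}. Tb a (Suc T) n m * X m)
      = (\<Sum>m\<in>{1..K}. \<Sum>l\<in>{1..K}. Tb a T n l * Jp a l m * X m)"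
    by (simp add: sum_distrib_right)
  also have "\<dots> = (\<Sum>l\<in>{1..K}. Tb a T n l * (\<Sum>m\<in>{1..K}. Jp a l m * X m))"
    by (subst sum.swap) (simp add: sum_distrib_left mult.assoc)
  also have "\<dots> = (\<Sum>l\<in>{1..K}. Tb a T n l * (X l - c l))"
    by (rule sum.cong) (use X in auto)
  finally have "(\<Sum>m\<in>{1..K}. Tb a (Suc T) n m * X m) =
     (\<Sum>l\<in>{1..K}. Tb a T n l * X l) - (\<Sum>l\<in>{1..K}. Tb a T n l * c l)"
    by (simp add: right_diff_distrib sum_subtractf)
  then show ?case using Suc by simp
qed

lemma Dg_one_nonneg: "adm a \<Longrightarrow> 0 \<le> Dg (\<lambda>_. 1) a k"
  by (induction k) (auto intro!: divide_nonneg_pos add_nonneg_nonneg mult_nonneg_nonneg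
       less_imp_le[OF out_pos] up_nonneg mu_pos)

lemma Xg_one_nonneg: "adm a \<Longrightarrow> 0 \<le> Xg (\<lambda>_. 1) a n"
  unfolding Xg_def by (auto intro!: sum_nonneg Dg_one_nonneg)

lemma taboo_lim:
  assumes adm: "adm a" and n: "n \<in> {1..K}" and m: "m \<in> {1..K}"
  shows "(\<lambda>t. Tb a t n m) \<longlonglongrightarrow> 0"
proof -
  let ?S = "\<lambda>t. \<Sum>m\<in>{1..K}. Tb a t n m"
  have tel: "(\<Sum>t<T. ?S t) = Xg (\<lambda>_. 1) a n - (\<Sum>m\<in>{1..K}. Tb a T n m * Xg (\<lambda>_. 1) a m)" for T
    using telescope[OF adm n, of "Xg (\<lambda>_. 1) a" "\<lambda>_. 1" T] Xg_eq[OF adm] by auto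
  have "(\<Sum>t<T. ?S t) \<le> Xg (\<lambda>_. 1) a n" for T
    unfolding tel using taboo_nonneg[OF adm] Xg_one_nonneg[OF adm]
    by (simp add: sum_nonneg)
  moreover have "0 \<le> ?S t" for t using taboo_nonneg[OF adm] by (simp add: sum_nonneg)
  ultimately have "summable ?S" by (intro summableI_nonneg_bounded)
  then have S0: "?S \<longlonglongrightarrow> 0" by (rule summable_LIMSEQ_zero)
  show ?thesis
  proof (rule tendsto_sandwich[OF _ _ tendsto_const S0])
    show "\<forall>\<^sub>F t in sequentially. 0 \<le> Tb a t n m" using taboo_nonneg[OF adm] by simp
    show "\<forall>\<^sub>F t in sequentially. Tb a t n m \<le> ?S t"
      by (intro always_eventually allI member_le_sum) (use taboo_nonneg[OF adm] m in auto)
  qed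
qed

lemma Xg_sums:
  assumes adm: "adm a" and n: "n \<in> {1..K}"
  shows "(\<lambda>t. \<Sum>m\<in>{1..K}. Tb a t n m * c m) sums Xg c a n"
proof -
  have tel: "(\<Sum>t<T. \<Sum>m\<in>{1..K}. Tb a t n m * c m) = Xg c a n - (\<Sum>m\<in>{1..K}. Tb a T n m * Xg c a m)" for T
    using telescope[OF adm n, of "Xg c a" c T] Xg_eq[OF adm] by auto
  have "(\<lambda>T. \<Sum>m\<in>{1..K}. Tb a T n m * Xg c a m) \<longlonglongrightarrow> 0"
    by (intro tendsto_null_sum tendsto_mult_left_zero taboo_lim[OF adm n]) auto
  then have "(\<lambda>T. Xg c a n - (\<Sum>m\<in>{1..K}. Tb a T n m * Xg c a m)) \<longlonglongrightarrow> Xg c a n - 0"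
    by (intro tendsto_diff tendsto_const)
  then show ?thesis unfolding sums_def tel by simp
qed

lemma cum_reward_eq:
  assumes adm: "adm a" and n: "n \<in> {1..K}"
  shows "cum_reward Js lam K mu eps eps0 estar nu eta g a n = Xg (\<lambda>m. Ft g a m / Out a m) a n"
proof -
  have "(\<lambda>t. \<Sum>m\<in>{1..K}. Tb a t n m * (Ft g a m / Out a m)) sums Xg (\<lambda>m. Ft g a m / Out a m) a n"
    by (rule Xg_sums[OF adm n])
  then show ?thesis unfolding cum_reward_def by (simp add: sums_iff)
qed

fun Dk :: "real \<Rightarrow> nat \<Rightarrow> real" where
  "Dk g 0 = (F K - g + (\<Sum>j\<in>Js. max 0 (- (nu j + eta j)))) / mu"
| "Dk g (Suc k) = (F (K - Suc k) - g + (\<Sum>j\<in>Js. max 0 (lam j * Dk g k - nu j))) / mu"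

definition greedy :: "real \<Rightarrow> 'j \<Rightarrow> nat \<Rightarrow> real" where
  "greedy g j n = (if n < K then (if nu j < lam j * Dk g (K - Suc n) then 1 else 0)
                   else (if nu j + eta j < 0 then 1 else 0))"

definition Hst :: "real \<Rightarrow> nat \<Rightarrow> real" where
  "Hst g n = (\<Sum>i\<in>{1..n}. Dk g (K - i))"

definition Phi :: "real \<Rightarrow> real" where
  "Phi g = F 0 - g + (\<Sum>j\<in>Js. max 0 (lam j * Dk g (K - 1) - nu j))"

lemma greedy_adm: "adm (greedy g)"
  unfolding admissible_def greedy_def by auto

lemma ax_le: "0 \<le> a \<Longrightarrow> a \<le> 1 \<Longrightarrow> a * x \<le> max 0 (x::real)"
  by (cases "0 \<le> x") (auto simp: mult_left_le_one_le mult_nonneg_nonpos)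

lemma ft_lt: "m < K \<Longrightarrow> Ft g a m + U a m * D = F m - g + (\<Sum>j\<in>Js. a j m * (lam j * D - nu j))"
  unfolding ftil_def up_def
  by (simp add: sum_distrib_right sum_distrib_left right_diff_distrib sum_subtractf algebra_simps)

lemma ft_K: "Ft g a K = F K - g + (\<Sum>j\<in>Js. a j K * (- (nu j + eta j)))"
proof -
  have "(\<Sum>j\<in>Js. a j K * (- (nu j + eta j))) = - (\<Sum>j\<in>Js. (nu j + eta j) * a j K)"
    by (simp add: sum_negf[symmetric] algebra_simps)
  then show ?thesis unfolding ftil_def by simp
qed

lemma Dg_le:
  assumes adm: "adm a"
  shows "k < K \<Longrightarrow> Dg (\<lambda>m. Ft g a m / Out a m) a k \<le> Dk g k"
proof (induction k)
  case 0
  have A: "\<forall>j\<in>Js. \<forall>n\<le>K. 0 \<le> a j n \<and> a j n \<le> 1" using adm unfolding admissible_def .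
  have "Dg (\<lambda>m. Ft g a m / Out a m) a 0 = Ft g a K / mu"
    using out_pos[OF adm, of K] by simp
  also have "\<dots> \<le> Dk g 0" unfolding ft_K Dk.simps
    using mu_pos A by (auto intro!: divide_right_mono sum_mono ax_le)
  finally show ?case .
next
  case (Suc k)
  have A: "\<forall>j\<in>Js. \<forall>n\<le>K. 0 \<le> a j n \<and> a j n \<le> 1" using adm unfolding admissible_def .
  define m where "m = K - Suc k"
  have m: "m < K" using Suc.prems unfolding m_def by simp
  have IH: "Dg (\<lambda>m. Ft g a m / Out a m) a k \<le> Dk g k" using Suc by simp
  have "Dg (\<lambda>m. Ft g a m / Out a m) a (Suc k) = (Ft g a m + U a m * Dg (\<lambda>m. Ft g a m / Out a m) a k) / mu"
    using out_pos[OF adm, of m] by (simp add: m_def)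
  also have "\<dots> = (F m - g + (\<Sum>j\<in>Js. a j m * (lam j * Dg (\<lambda>m. Ft g a m / Out a m) a k - nu j))) / mu"
    using ft_lt[OF m] by simp
  also have "\<dots> \<le> Dk g (Suc k)" unfolding Dk.simps m_def[symmetric]
  proof (intro divide_right_mono add_left_mono sum_mono)
    fix j assume j: "j \<in> Js"
    have a: "0 \<le> a j m" "a j m \<le> 1" using A j m by auto
    have "a j m * (lam j * Dg (\<lambda>m. Ft g a m / Out a m) a k - nu j) \<le> a j m * (lam j * Dk g k - nu j)"
      using IH a lam_pos[OF j] by (intro mult_left_mono) auto
    also have "\<dots> \<le> max 0 (lam j * Dk g k - nu j)" using a by (rule ax_le)
    finally show "a j m * (lam j * Dg (\<lambda>m. Ft g a m / Out a m) a k - nu j) \<le> max 0 (lam j * Dk g k - nu j)" .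
  qed (use mu_pos in auto)
  finally show ?case .
qed

lemma Dg_eq:
  assumes adm: "adm a" and gr: "\<And>j m. j \<in> Js \<Longrightarrow> 1 \<le> m \<Longrightarrow> m \<le> K \<Longrightarrow> a j m = greedy g j m"
  shows "k < K \<Longrightarrow> Dg (\<lambda>m. Ft g a m / Out a m) a k = Dk g k"
proof (induction k)
  case 0
  have "Dg (\<lambda>m. Ft g a m / Out a m) a 0 = Ft g a K / mu"
    using out_pos[OF adm, of K] by simp
  also have "\<dots> = Dk g 0" unfolding ft_K Dk.simps
    using mu_pos gr K_ge by (auto intro!: sum.cong simp: greedy_def)
  finally show ?case .
next
  case (Suc k)
  define m where "m = K - Suc k"
  have m: "m < K" "1 \<le> m" using Suc.prems unfolding m_def by auto
  have km: "K - Suc m = k" using Suc.prems unfolding m_def by simp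
  have IH: "Dg (\<lambda>m. Ft g a m / Out a m) a k = Dk g k" using Suc by simp
  have "Dg (\<lambda>m. Ft g a m / Out a m) a (Suc k) = (Ft g a m + U a m * Dg (\<lambda>m. Ft g a m / Out a m) a k) / mu"
    using out_pos[OF adm, of m] by (simp add: m_def)
  also have "\<dots> = (F m - g + (\<Sum>j\<in>Js. a j m * (lam j * Dk g k - nu j))) / mu"
    using ft_lt[OF m(1)] IH by simp
  also have "\<dots> = Dk g (Suc k)" unfolding Dk.simps m_def[symmetric]
    using gr m km by (auto intro!: sum.cong simp: greedy_def)
  finally show ?case .
qed

lemma Xg_le:
  assumes adm: "adm a" and n: "n \<le> K"
  shows "Xg (\<lambda>m. Ft g a m / Out a m) a n \<le> Hst g n"
  unfolding Xg_def Hst_def using n by (intro sum_mono Dg_le[OF adm]) auto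

lemma Xg_greedy:
  assumes adm: "adm a" and gr: "\<And>j m. j \<in> Js \<Longrightarrow> 1 \<le> m \<Longrightarrow> m \<le> K \<Longrightarrow> a j m = greedy g j m"
    and n: "n \<le> K"
  shows "Xg (\<lambda>m. Ft g a m / Out a m) a n = Hst g n"
  unfolding Xg_def Hst_def using n by (intro sum.cong refl Dg_eq[OF adm gr]) auto




lemma gen_alt: "Gn a n m = (if m = Suc n then U a n else 0) + (if 0 < n \<and> m = n - 1 then mu else 0)
   - (if m = n then U a n + (if 0 < n then mu else 0) else 0)"
  unfolding gen_def by auto

lemma row_sum:
  assumes n: "n \<le> K"
  shows "(\<Sum>m\<le>K. Gn a n m * h m) = (if n < K then U a n * h (Suc n) else 0)
     + (if 0 < n then mu * h (n - 1) else 0) - (U a n + (if 0 < n then mu else 0)) * h n"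
proof -
  have "(\<Sum>m\<le>K. Gn a n m * h m) = (\<Sum>m\<le>K. (if m = Suc n then U a n * h m else 0))
     + (\<Sum>m\<le>K. (if m = n - 1 then (if 0 < n then mu * h m else 0) else 0))
     - (\<Sum>m\<le>K. (if m = n then (U a n + (if 0 < n then mu else 0)) * h m else 0))"
    unfolding gen_alt sum.distrib[symmetric] sum_subtractf[symmetric]
    by (rule sum.cong) (auto simp: algebra_simps)
  also have "\<dots> = (if n < K then U a n * h (Suc n) else 0)
     + (if 0 < n then mu * h (n - 1) else 0) - (U a n + (if 0 < n then mu else 0)) * h n"
    using n by (auto simp: sum.delta)
  finally show ?thesis .
qed

lemma col_sum:
  assumes m: "m \<le> K"
  shows "(\<Sum>n\<le>K. p n * Gn a n m) = (if 0 < m then p (m - 1) * U a (m - 1) else 0)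
     + (if m < K then p (Suc m) * mu else 0) - p m * (U a m + (if 0 < m then mu else 0))"
proof -
  have "(\<Sum>n\<le>K. p n * Gn a n m) = (\<Sum>n\<le>K. (if n = m - 1 then (if 0 < m then p n * U a n else 0) else 0))
     + (\<Sum>n\<le>K. (if n = Suc m then p n * mu else 0))
     - (\<Sum>n\<le>K. (if n = m then p n * (U a m + (if 0 < m then mu else 0)) else 0))"
    unfolding gen_alt sum.distrib[symmetric] sum_subtractf[symmetric]
    by (rule sum.cong) (auto simp: algebra_simps)
  also have "\<dots> = (if 0 < m then p (m - 1) * U a (m - 1) else 0)
     + (if m < K then p (Suc m) * mu else 0) - p m * (U a m + (if 0 < m then mu else 0))"
    using m by (auto simp: sum.delta)
  finally show ?thesis .
qed

abbreviation "stat a p \<equiv> stationary Js lam K mu a p"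

lemma stat_db:
  assumes st: "stat a p"
  shows "n < K \<Longrightarrow> p n * U a n = p (Suc n) * mu"
proof (induction n)
  case 0
  have "(\<Sum>n\<le>K. p n * Gn a n 0) = 0" using st unfolding stationary_def by auto
  then show ?case using col_sum[of 0 p a] 0 by simp
next
  case (Suc n)
  have "(\<Sum>k\<le>K. p k * Gn a k (Suc n)) = 0" using st Suc.prems unfolding stationary_def by auto
  then show ?case using col_sum[of "Suc n" p a] Suc by (simp add: algebra_simps)
qed

fun w :: "('j \<Rightarrow> nat \<Rightarrow> real) \<Rightarrow> nat \<Rightarrow> real" where
  "w a 0 = 1"
| "w a (Suc n) = w a n * U a n / mu"

definition Ws :: "('j \<Rightarrow> nat \<Rightarrow> real) \<Rightarrow> real" where
  "Ws a = (\<Sum>n\<le>K. w a n)"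

definition pst :: "('j \<Rightarrow> nat \<Rightarrow> real) \<Rightarrow> nat \<Rightarrow> real" where
  "pst a n = (if n \<le> K then w a n / Ws a else 0)"

lemma w_nonneg: "adm a \<Longrightarrow> 0 \<le> w a n"
  by (induction n) (auto intro!: divide_nonneg_pos mult_nonneg_nonneg up_nonneg mu_pos)

lemma Ws_ge1: "adm a \<Longrightarrow> 1 \<le> Ws a"
proof -
  assume adm: "adm a"
  have "w a 0 \<le> Ws a" unfolding Ws_def
    by (rule member_le_sum) (auto intro: w_nonneg[OF adm])
  then show ?thesis by simp
qed

lemma stat_w:
  assumes st: "stat a p"
  shows "n \<le> K \<Longrightarrow> p n = p 0 * w a n"
proof (induction n)
  case 0 then show ?case by simp
next
  case (Suc n)
  then have "p (Suc n) * mu = p n * U a n" using stat_db[OF st, of n] by simp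
  then have "p (Suc n) = p n * U a n / mu" using mu_pos by (simp add: field_simps)
  then show ?case using Suc by simp
qed

lemma pst_stat: assumes adm: "adm a" shows "stat a (pst a)"
proof -
  have W: "1 \<le> Ws a" using Ws_ge1[OF adm] .
  have db: "pst a n * U a n = pst a (Suc n) * mu" if "n < K" for n
    using that mu_pos W by (simp add: pst_def field_simps)
  have "(\<Sum>n\<le>K. pst a n) = (\<Sum>n\<le>K. w a n) / Ws a"
    unfolding pst_def by (simp add: sum_divide_distrib)
  then have s1: "(\<Sum>n\<le>K. pst a n) = 1" using W unfolding Ws_def by simp
  have bal: "(\<Sum>n\<le>K. pst a n * Gn a n m) = 0" if m: "m \<le> K" for m
  proof -
    have A: "(if 0 < m then pst a (m - 1) * U a (m - 1) else 0) = (if 0 < m then pst a m * mu else 0)"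
      using db[of "m - 1"] m by auto
    have B: "(if m < K then pst a (Suc m) * mu else 0) = pst a m * U a m"
      using db[of m] up_K[of m a] m by auto
    show ?thesis unfolding col_sum[OF m] A B by (simp add: algebra_simps)
  qed
  show ?thesis unfolding stationary_def
    using s1 bal W by (auto simp: pst_def intro!: divide_nonneg_pos w_nonneg[OF adm])
qed

lemma stat_unique: assumes adm: "adm a" and st: "stat a p" shows "p = pst a"
proof
  fix n
  have W: "1 \<le> Ws a" using Ws_ge1[OF adm] .
  have "1 = (\<Sum>n\<le>K. p n)" using st unfolding stationary_def by simp
  also have "\<dots> = (\<Sum>n\<le>K. p 0 * w a n)"
  proof (rule sum.cong)
    fix n assume "n \<in> {..K}" then show "p n = p 0 * w a n" by (intro stat_w[OF st]) simp
  qed simp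
  also have "\<dots> = p 0 * Ws a" unfolding Ws_def by (simp add: sum_distrib_left)
  finally have p0: "p 0 = 1 / Ws a" using W by (simp add: field_simps)
  show "p n = pst a n"
  proof (cases "n \<le> K")
    case True then show ?thesis using stat_w[OF st True] p0 by (simp add: pst_def)
  next
    case False then show ?thesis using st unfolding stationary_def pst_def by auto
  qed
qed

lemma steady_eq: assumes adm: "adm a" shows "steady Js lam K mu a = pst a"
  unfolding steady_def
proof (rule the_equality)
  show "stat a (pst a)" by (rule pst_stat[OF adm])
  fix p assume "stat a p" then show "p = pst a" by (rule stat_unique[OF adm])
qed

definition Cb :: real where "Cb = (\<Sum>n\<le>K. ((\<Sum>j\<in>Js. lam j) / mu) ^ n)"

lemma w_le: "adm a \<Longrightarrow> w a n \<le> ((\<Sum>j\<in>Js. lam j) / mu) ^ n"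
proof (induction n)
  case 0 then show ?case by simp
next
  case (Suc n)
  have "w a (Suc n) = w a n * (U a n / mu)" by simp
  also have "\<dots> \<le> ((\<Sum>j\<in>Js. lam j) / mu) ^ n * ((\<Sum>j\<in>Js. lam j) / mu)"
    using Suc w_nonneg[OF Suc.prems, of n] up_nonneg[OF Suc.prems, of n] up_le[OF Suc.prems, of n] mu_pos
    by (intro mult_mono divide_right_mono) auto
  finally show ?case by (simp add: mult.commute)
qed

lemma pst0: "adm a \<Longrightarrow> 1 / Cb \<le> pst a 0 \<and> 0 < 1 / Cb \<and> pst a 0 \<le> 1"
proof -
  assume adm: "adm a"
  have W: "1 \<le> Ws a" using Ws_ge1[OF adm] .
  have "Ws a \<le> Cb" unfolding Ws_def Cb_def using w_le[OF adm] by (intro sum_mono) auto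
  then show ?thesis using W by (auto simp: pst_def intro!: divide_left_mono)
qed

abbreviation "avg a \<equiv> avg_reward Js lam K mu eps eps0 estar nu eta a"

definition Tn :: "('j \<Rightarrow> nat \<Rightarrow> real) \<Rightarrow> real \<Rightarrow> nat \<Rightarrow> real" where
  "Tn a g n = Rw a n - g + (\<Sum>m\<le>K. Gn a n m * Hst g m)"

lemma Rw_Ft: "n \<le> K \<Longrightarrow> Rw a n - g = Ft g a n"
  unfolding sp_reward_def ftil_def by (auto simp: sum.distrib algebra_simps)

lemma Hst_0: "Hst g 0 = 0" unfolding Hst_def by simp

lemma Hst_Suc: "Hst g (Suc n) = Hst g n + Dk g (K - Suc n)"
  unfolding Hst_def by (simp add: sum.cl_ivl_Suc)

definition xv :: "real \<Rightarrow> 'j \<Rightarrow> nat \<Rightarrow> real" where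
  "xv g j n = (if n < K then lam j * Dk g (K - Suc n) - nu j else - (nu j + eta j))"

lemma Tn_pos_val:
  assumes n: "1 \<le> n" "n \<le> K"
  shows "Tn a g n = (\<Sum>j\<in>Js. a j n * xv g j n) - (\<Sum>j\<in>Js. max 0 (xv g j n))"
proof -
  obtain n' where n': "n = Suc n'" using n by (cases n) auto
  have Hm: "Hst g (n - 1) = Hst g n - Dk g (K - n)" using Hst_Suc[of g n'] n' by simp
  have T: "Tn a g n = Ft g a n + (if n < K then U a n * Hst g (Suc n) else 0)
     + mu * Hst g (n - 1) - (U a n + mu) * Hst g n"
    unfolding Tn_def row_sum[OF n(2)] Rw_Ft[OF n(2)] using n by simp
  show ?thesis
  proof (cases "n < K")
    case True
    have KK: "K - n = Suc (K - Suc n)" using True by simp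
    have e: "K - Suc (K - Suc n) = n" using True by simp
    have "Dk g (K - n) = (F n - g + (\<Sum>j\<in>Js. max 0 (lam j * Dk g (K - Suc n) - nu j))) / mu"
      unfolding KK Dk.simps e ..
    then have D: "mu * Dk g (K - n) = F n - g + (\<Sum>j\<in>Js. max 0 (lam j * Dk g (K - Suc n) - nu j))"
      using mu_pos by simp
    have "Tn a g n = Ft g a n + U a n * Dk g (K - Suc n) - mu * Dk g (K - n)"
      unfolding T Hm Hst_Suc using True by (simp add: algebra_simps)
    also have "\<dots> = (\<Sum>j\<in>Js. a j n * xv g j n) - (\<Sum>j\<in>Js. max 0 (xv g j n))"
      unfolding ft_lt[OF True] D xv_def using True by simp
    finally show ?thesis .
  next
    case False
    then have nK: "n = K" using n by simp
    have "Tn a g n = Ft g a K - mu * Dk g 0"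
      unfolding T Hm using nK up_K[of K a] by (simp add: algebra_simps)
    also have "\<dots> = (\<Sum>j\<in>Js. a j n * xv g j n) - (\<Sum>j\<in>Js. max 0 (xv g j n))"
      unfolding ft_K xv_def using nK mu_pos by simp
    finally show ?thesis .
  qed
qed

lemma Tn_0_val: "Tn a g 0 = F 0 - g + (\<Sum>j\<in>Js. a j 0 * (lam j * Dk g (K - 1) - nu j))"
proof -
  have K0: "0 < K" using K_ge by simp
  have "Tn a g 0 = Ft g a 0 + U a 0 * Dk g (K - 1)"
    unfolding Tn_def row_sum[OF le0] Rw_Ft[OF le0] using K0 Hst_Suc[of g 0] Hst_0[of g]
    by (simp add: algebra_simps)
  also have "\<dots> = F 0 - g + (\<Sum>j\<in>Js. a j 0 * (lam j * Dk g (K - 1) - nu j))"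
    using ft_lt[OF K0] by simp
  finally show ?thesis .
qed

lemma Tn_pos_le:
  assumes adm: "adm a" and n: "1 \<le> n" "n \<le> K"
  shows "Tn a g n \<le> 0"
proof -
  have "(\<Sum>j\<in>Js. a j n * xv g j n) \<le> (\<Sum>j\<in>Js. max 0 (xv g j n))"
    using adm n unfolding admissible_def by (intro sum_mono ax_le) auto
  then show ?thesis unfolding Tn_pos_val[OF n] by simp
qed

lemma Tn_pos_greedy:
  assumes n: "1 \<le> n" "n \<le> K"
  shows "Tn (greedy g) g n = 0"
proof -
  have "(\<Sum>j\<in>Js. greedy g j n * xv g j n) = (\<Sum>j\<in>Js. max 0 (xv g j n))"
    by (rule sum.cong) (auto simp: greedy_def xv_def)
  then show ?thesis unfolding Tn_pos_val[OF n] by simp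
qed

lemma Tn_0_le: "adm a \<Longrightarrow> Tn a g 0 \<le> Phi g"
  unfolding Tn_0_val Phi_def admissible_def by (auto intro!: sum_mono ax_le)

lemma Tn_0_greedy: "Tn (greedy g) g 0 = Phi g"
proof -
  have K0: "0 < K" using K_ge by simp
  have "(\<Sum>j\<in>Js. greedy g j 0 * (lam j * Dk g (K - 1) - nu j)) = (\<Sum>j\<in>Js. max 0 (lam j * Dk g (K - 1) - nu j))"
    by (rule sum.cong) (use K0 in \<open>auto simp: greedy_def\<close>)
  then show ?thesis unfolding Tn_0_val Phi_def by simp
qed

lemma avg_id:
  assumes adm: "adm a"
  shows "avg a - g = (\<Sum>n\<le>K. pst a n * Tn a g n)"
proof -
  have st: "stat a (pst a)" by (rule pst_stat[OF adm])
  have Q: "(\<Sum>n\<le>K. pst a n * (\<Sum>m\<le>K. Gn a n m * Hst g m)) = 0"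
  proof -
    have "(\<Sum>n\<le>K. pst a n * (\<Sum>m\<le>K. Gn a n m * Hst g m))
        = (\<Sum>m\<le>K. Hst g m * (\<Sum>n\<le>K. pst a n * Gn a n m))"
    proof -
      have "(\<Sum>n\<le>K. pst a n * (\<Sum>m\<le>K. Gn a n m * Hst g m))
          = (\<Sum>n\<le>K. \<Sum>m\<le>K. pst a n * Gn a n m * Hst g m)"
        by (simp add: sum_distrib_left mult.assoc)
      also have "\<dots> = (\<Sum>m\<le>K. \<Sum>n\<le>K. pst a n * Gn a n m * Hst g m)"
        by (rule sum.swap)
      also have "\<dots> = (\<Sum>m\<le>K. Hst g m * (\<Sum>n\<le>K. pst a n * Gn a n m))"
        by (simp add: sum_distrib_left mult.commute)
      finally show ?thesis .
    qed
    also have "\<dots> = 0" using st unfolding stationary_def by simp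
    finally show ?thesis .
  qed
  have s1: "(\<Sum>n\<le>K. pst a n) = 1" using st unfolding stationary_def by simp
  have "(\<Sum>n\<le>K. pst a n * Tn a g n) = (\<Sum>n\<le>K. pst a n * Rw a n) - g * (\<Sum>n\<le>K. pst a n)
      + (\<Sum>n\<le>K. pst a n * (\<Sum>m\<le>K. Gn a n m * Hst g m))"
    unfolding Tn_def by (simp add: algebra_simps sum.distrib sum_subtractf sum_distrib_left)
  then show ?thesis unfolding Q s1 avg_reward_def steady_eq[OF adm] by simp
qed

lemma sum_split0: "(\<Sum>n\<le>K. f n) = f 0 + (\<Sum>n\<in>{1..K}. (f n :: real))"
proof -
  have "{..K} = insert 0 {1..K}" by auto
  then show ?thesis by simp
qed

lemma avg_le:
  assumes adm: "adm a"
  shows "avg a - g \<le> pst a 0 * Phi g"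
proof -
  have p0: "0 \<le> pst a 0"
  proof -
    have "0 < 1 / Cb" "1 / Cb \<le> pst a 0" using pst0[OF adm] by auto
    then show ?thesis by linarith
  qed
  have "avg a - g = pst a 0 * Tn a g 0 + (\<Sum>i\<in>{1..K}. pst a i * Tn a g i)"
    unfolding avg_id[OF adm] sum_split0[of "\<lambda>n. pst a n * Tn a g n"] ..
  also have "\<dots> \<le> pst a 0 * Phi g + 0"
  proof (intro add_mono mult_left_mono Tn_0_le[OF adm] p0 sum_nonpos)
    fix i assume "i \<in> {1..K}"
    then have "0 \<le> pst a i" "Tn a g i \<le> 0"
      using pst_stat[OF adm] Tn_pos_le[OF adm, of i g] unfolding stationary_def by auto
    then show "pst a i * Tn a g i \<le> 0" by (simp add: mult_nonneg_nonpos)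
  qed
  finally show ?thesis by simp
qed

lemma avg_greedy: "avg (greedy g) - g = pst (greedy g) 0 * Phi g"
proof -
  have "avg (greedy g) - g = pst (greedy g) 0 * Tn (greedy g) g 0
      + (\<Sum>i\<in>{1..K}. pst (greedy g) i * Tn (greedy g) g i)"
    unfolding avg_id[OF greedy_adm] sum_split0[of "\<lambda>n. pst (greedy g) n * Tn (greedy g) g n"] ..
  also have "(\<Sum>i\<in>{1..K}. pst (greedy g) i * Tn (greedy g) g i) = 0"
    by (intro sum.neutral) (auto simp: Tn_pos_greedy)
  finally show ?thesis unfolding Tn_0_greedy by simp
qed

definition gs :: real where "gs = (SUP a \<in> {a. adm a}. avg a)"

lemma pst0_pos: "adm a \<Longrightarrow> 0 < pst a 0"
proof -
  assume adm: "adm a"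
  have "0 < 1 / Cb" "1 / Cb \<le> pst a 0" using pst0[OF adm] by auto
  then show ?thesis by linarith
qed

lemma avg_bdd: "bdd_above (avg ` {a. adm a})"
proof (rule bdd_aboveI2)
  fix a assume "a \<in> {a. adm a}"
  then have adm: "adm a" by simp
  have "avg a - 0 \<le> pst a 0 * Phi 0" by (rule avg_le[OF adm])
  also have "\<dots> \<le> max 0 (Phi 0)"
    using pst0[OF adm] pst0_pos[OF adm] by (intro ax_le) auto
  finally show "avg a \<le> max 0 (Phi 0)" by simp
qed

lemma avg_le_gs: "adm a \<Longrightarrow> avg a \<le> gs"
  unfolding gs_def by (rule cSUP_upper[OF _ avg_bdd]) simp

lemma Phi_gs: "Phi gs = 0"
proof (rule ccontr)
  assume ne: "Phi gs \<noteq> 0"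
  show False
  proof (cases "Phi gs > 0")
    case True
    have "avg (greedy gs) - gs = pst (greedy gs) 0 * Phi gs" by (rule avg_greedy)
    also have "\<dots> > 0" using True pst0_pos[OF greedy_adm] by simp
    finally show False using avg_le_gs[OF greedy_adm, of gs] by simp
  next
    case False
    then have neg: "Phi gs < 0" using ne by simp
    have Cb: "0 < 1 / Cb" using pst0[OF greedy_adm] by auto
    define c where "c = gs + 1 / Cb * Phi gs"
    have "(SUP a \<in> {a. adm a}. avg a) \<le> c"
    proof (rule cSUP_least)
      show "{a. adm a} \<noteq> {}" using greedy_adm by auto
      fix a assume "a \<in> {a. adm a}"
      then have adm: "adm a" by simp
      have "avg a - gs \<le> pst a 0 * Phi gs" by (rule avg_le[OF adm])
      also have "\<dots> \<le> 1 / Cb * Phi gs"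
        using pst0[OF adm] neg by (intro mult_right_mono_neg) auto
      finally show "avg a \<le> c" unfolding c_def by simp
    qed
    then have "gs \<le> gs + 1 / Cb * Phi gs" unfolding c_def gs_def[symmetric] .
    moreover have "1 / Cb * Phi gs < 0" using Cb neg by (simp add: divide_neg_pos)
    ultimately show False by simp
  qed
qed

lemma greedy_opt: "avg (greedy gs) = gs"
  using avg_greedy[of gs] Phi_gs by simp

lemma V_eq:
  assumes ne: "Js \<noteq> {}" and n: "1 \<le> n" "n \<le> K"
  shows "Vfun Js lam K mu eps eps0 estar nu eta g n = Hst g n"
proof -
  define A0 where "A0 = {a. adm a \<and> 0 < (\<Sum>j\<in>Js. a j 0)}"
  define a' where "a' = (\<lambda>j m. if m = 0 then 1 else greedy g j m)"
  have a'adm: "adm a'" unfolding a'_def admissible_def greedy_def by auto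
  have a'A: "a' \<in> A0" unfolding A0_def using a'adm ne finJs by (simp add: a'_def card_gt_0_iff)
  have le: "cum_reward Js lam K mu eps eps0 estar nu eta g a n \<le> Hst g n" if "a \<in> A0" for a
  proof -
    have adm: "adm a" using that unfolding A0_def by simp
    have "cum_reward Js lam K mu eps eps0 estar nu eta g a n = Xg (\<lambda>m. Ft g a m / Out a m) a n"
      by (rule cum_reward_eq[OF adm]) (use n in auto)
    then show ?thesis using n Xg_le[OF adm, of n g] by simp
  qed
  have "cum_reward Js lam K mu eps eps0 estar nu eta g a' n = Xg (\<lambda>m. Ft g a' m / Out a' m) a' n"
    by (rule cum_reward_eq[OF a'adm]) (use n in auto)
  also have "\<dots> = Hst g n" using n
    by (intro Xg_greedy[OF a'adm]) (auto simp: a'_def)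
  finally have eq: "cum_reward Js lam K mu eps eps0 estar nu eta g a' n = Hst g n" .
  have "(SUP a \<in> A0. cum_reward Js lam K mu eps eps0 estar nu eta g a n) = Hst g n"
  proof (rule antisym)
    show "(SUP a \<in> A0. cum_reward Js lam K mu eps eps0 estar nu eta g a n) \<le> Hst g n"
      using a'A le by (intro cSUP_least) auto
    show "Hst g n \<le> (SUP a \<in> A0. cum_reward Js lam K mu eps eps0 estar nu eta g a n)"
      unfolding eq[symmetric] using a'A le
      by (intro cSUP_upper) (auto intro!: bdd_aboveI2)
  qed
  then show ?thesis unfolding Vfun_def A0_def using n by simp
qed


end

theorem lemma1:
  fixes J :: "'j set" and S :: "'s set" and grp :: "'s \<Rightarrow> 'k"
    and Jsrv :: "'s \<Rightarrow> 'j set" and lam :: "'j \<Rightarrow> real"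
    and mu eps eps0 :: "'k \<Rightarrow> real" and B :: "'k \<Rightarrow> nat" and estar :: real
    and s :: 's and nu :: "'j \<Rightarrow> real" and eta :: "'j \<Rightarrow> real"
  assumes finJ: "finite J"
    and lam_pos: "\<forall>j\<in>J. 0 < lam j"
    and Jsrv_sub: "\<forall>t\<in>S. Jsrv t \<subseteq> J"
    and mu_pos: "\<forall>t\<in>S. 0 < mu (grp t)"
    and B_ge: "\<forall>t\<in>S. 1 \<le> B (grp t)"
    and eps_ord: "\<forall>t\<in>S. eps0 (grp t) < eps (grp t) \<and> 0 \<le> eps0 (grp t)"
    and sS: "s \<in> S"
  shows "\<exists>alpha. admissible (Jsrv s) (B (grp s)) alpha \<and>
     (\<forall>beta. admissible (Jsrv s) (B (grp s)) beta \<longrightarrow>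
        avg_reward (Jsrv s) lam (B (grp s)) (mu (grp s)) (eps (grp s)) (eps0 (grp s)) estar nu eta beta
        \<le> avg_reward (Jsrv s) lam (B (grp s)) (mu (grp s)) (eps (grp s)) (eps0 (grp s)) estar nu eta alpha) \<and>
     (let g = gstar (Jsrv s) lam (B (grp s)) (mu (grp s)) (eps (grp s)) (eps0 (grp s)) estar nu eta;
          V = Vfun (Jsrv s) lam (B (grp s)) (mu (grp s)) (eps (grp s)) (eps0 (grp s)) estar nu eta g
      in \<forall>j\<in>Jsrv s. \<forall>n<B (grp s).
           (nu j / lam j < V (Suc n) - V n \<longrightarrow> alpha j n = 1) \<and>
           (nu j / lam j = V (Suc n) - V n \<longrightarrow> alpha j n = 1 \<or> alpha j n = 0) \<and>
           (nu j / lam j > V (Suc n) - V n \<longrightarrow> alpha j n = 0))"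
  proof -
  let ?Js = "Jsrv s" and ?K = "B (grp s)" and ?mu = "mu (grp s)"
  interpret spl "Jsrv s" lam "B (grp s)" "mu (grp s)" "eps (grp s)" "eps0 (grp s)" estar nu eta
  proof
    show "finite (Jsrv s)" using finJ Jsrv_sub sS by (meson finite_subset)
    show "\<And>j. j \<in> Jsrv s \<Longrightarrow> 0 < lam j" using lam_pos Jsrv_sub sS by blast
    show "0 < mu (grp s)" using mu_pos sS by blast
    show "1 \<le> B (grp s)" using B_ge sS by blast
  qed
  have gg: "gstar (Jsrv s) lam (B (grp s)) (mu (grp s)) (eps (grp s)) (eps0 (grp s)) estar nu eta = gs"
    unfolding gstar_def gs_def ..
  have lamp: "\<And>j. j \<in> Jsrv s \<Longrightarrow> 0 < lam j" using lam_pos Jsrv_sub sS by blast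
  show ?thesis
  proof (intro exI[of _ "greedy gs"] conjI allI impI)
    show "admissible (Jsrv s) (B (grp s)) (greedy gs)" by (rule greedy_adm)
    fix beta assume "admissible (Jsrv s) (B (grp s)) beta"
    then show "avg beta \<le> avg (greedy gs)" using avg_le_gs greedy_opt by simp
  next
    show "let g = gstar (Jsrv s) lam (B (grp s)) (mu (grp s)) (eps (grp s)) (eps0 (grp s)) estar nu eta;
          V = Vfun (Jsrv s) lam (B (grp s)) (mu (grp s)) (eps (grp s)) (eps0 (grp s)) estar nu eta g
      in \<forall>j\<in>Jsrv s. \<forall>n<B (grp s).
           (nu j / lam j < V (Suc n) - V n \<longrightarrow> greedy gs j n = 1) \<and>
           (nu j / lam j = V (Suc n) - V n \<longrightarrow> greedy gs j n = 1 \<or> greedy gs j n = 0) \<and>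
           (nu j / lam j > V (Suc n) - V n \<longrightarrow> greedy gs j n = 0)"
      unfolding Let_def gg
    proof (intro ballI allI impI)
      fix j n assume j: "j \<in> Jsrv s" and n: "n < B (grp s)"
      let ?V = "Vfun (Jsrv s) lam (B (grp s)) (mu (grp s)) (eps (grp s)) (eps0 (grp s)) estar nu eta gs"
      have ne: "Jsrv s \<noteq> {}" using j by auto
      have V1: "?V (Suc n) = Hst gs (Suc n)" using V_eq[OF ne, of "Suc n" gs] n by simp
      have V0: "?V n = Hst gs n"
      proof (cases "n = 0")
        case True then show ?thesis unfolding Vfun_def Hst_def by simp
      next
        case False then show ?thesis using V_eq[OF ne, of n gs] n by simp
      qed
      have dV: "?V (Suc n) - ?V n = Dk gs (B (grp s) - Suc n)" unfolding V1 V0 Hst_Suc by simp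
      have gr: "greedy gs j n = (if nu j < lam j * Dk gs (B (grp s) - Suc n) then 1 else 0)"
        unfolding greedy_def using n by simp
      have l: "0 < lam j" using lamp[OF j] .
      have e1: "nu j / lam j < Dk gs (B (grp s) - Suc n) \<longleftrightarrow> nu j < lam j * Dk gs (B (grp s) - Suc n)"
        using l by (simp add: pos_divide_less_eq mult.commute)
      show "(nu j / lam j < ?V (Suc n) - ?V n \<longrightarrow> greedy gs j n = 1) \<and>
           (nu j / lam j = ?V (Suc n) - ?V n \<longrightarrow> greedy gs j n = 1 \<or> greedy gs j n = 0) \<and>
           (nu j / lam j > ?V (Suc n) - ?V n \<longrightarrow> greedy gs j n = 0)"
        unfolding dV gr using e1 by auto
    qed
  qed
qed

end
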